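(* Let $l\in\mathbb N-\frac12$ and let $V$ be a simple weight $(\mathbb Ch+\tilde{\mathcal H}^{(l)})$-module on which $z$ acts as a nonzero scalar $\dot z$, such that $\mathrm{supp}(V)\subseteq\lambda+\mathbb Z$ for some $\lambda\in\mathbb C$ with $\dim V_\lambda<\infty$. (i) If $l=\frac12$, then $V$ is a highest weight module, or a lowest weight module, or $V$ is isomorphic to $D(a,\dot z)$ for some $a\in\mathbb C\setminus\mathbb Z$, where $h$ acts on $D(a,\dot z)$ by $hx^i=(\mu-i)x^i$ for some $\mu\in\mathbb C$. (ii) If $l\in\mathbb N+\frac12$ (i.e. $l\ge\frac32$), then $V$ is a highest weight module or a lowest weight module.
   Context: For $l\in\mathbb N-\frac12$, $\tilde{\mathcal H}^{(l)}$ has basis $p_0,\dots,p_{2l},z$ with $z$ central and $[p_k,p_{k'}]=\delta_{k+k',2l}(-1)^{k+l+\frac12}k!(2l-k)!\,z$; the Lie algebra $\mathbb Ch+\tilde{\mathcal H}^{(l)}$ has additionally $[h,p_k]=2(l-k)p_k$, $[h,z]=0$. A weight module is one on which $h$ acts diagonalizably; $V_\lambda=\{v:hv=\lambda v\}$, $\mathrm{supp}(V)=\{\lambda:V_\lambda\ne0\}$. A highest (resp. lowest) weight module is one generated by a weight vector annihilated by all $p_k$ with $k<l$ (resp. $k>l$). For $\dot z\ne0$ and $a\in\mathbb C$, $D(a,\dot z)$ is the $\tilde{\mathcal H}^{(1/2)}$-module $\mathbb C[x,x^{-1}]$ with $p_1x^i=x^{i+1}$, $p_0x^i=-\dot z(a+i)x^{i-1}$,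 $zx^i=\dot zx^i$ ($i\in\mathbb Z$). *)

theory Defs
  imports Complex_Main
begin

(* Throughout, l = m + 1/2 with m :: nat, so 2l = 2m+1 and the basis of the
   Heisenberg part is p_0,...,p_{2m+1}, z.  A module V is a complex vector
   space ('v with scalar multiplication scale, satisfying vector_space scale)
   together with operators H (action of h), P k (action of p_k) and Z (action
   of z). *)

definition heis_coeff :: "nat \<Rightarrow> nat \<Rightarrow> complex" where
  "heis_coeff m k = (-1) ^ (k + m + 1) * of_nat (fact k * fact (2*m + 1 - k))"
  (* (-1)^(k+l+1/2) k! (2l-k)!  with l = m + 1/2 *)

definition is_hmod ::
  "(complex \<Rightarrow> 'v::ab_group_add \<Rightarrow> 'v) \<Rightarrow> nat \<Rightarrow> ('v \<Rightarrow> 'v) \<Rightarrow> (nat \<Rightarrow> 'v \<Rightarrow> 'v) \<Rightarrow> ('v \<Rightarrow> 'v) \<Rightarrow> bool" where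
  "is_hmod scale m H P Z \<longleftrightarrow>
     vector_space scale \<and>
     Vector_Spaces.linear scale scale H \<and> Vector_Spaces.linear scale scale Z \<and>
     (\<forall>k \<le> 2*m+1. Vector_Spaces.linear scale scale (P k)) \<and>
     (\<forall>k \<le> 2*m+1. \<forall>v. H (P k v) - P k (H v) = scale (2 * of_nat m + 1 - 2 * of_nat k) (P k v)) \<and>
     (\<forall>v. H (Z v) - Z (H v) = 0) \<and>
     (\<forall>k \<le> 2*m+1. \<forall>v. P k (Z v) - Z (P k v) = 0) \<and>
     (\<forall>k \<le> 2*m+1. \<forall>k' \<le> 2*m+1. \<forall>v.
        P k (P k' v) - P k' (P k v) = scale (if k + k' = 2*m+1 then heis_coeff m k else 0) (Z v))"

definition weight_space :: "(complex \<Rightarrow> 'v \<Rightarrow> 'v) \<Rightarrow> ('v \<Rightarrow> 'v) \<Rightarrow> complex \<Rightarrow> 'v set" where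
  "weight_space scale H \<mu> = {v. H v = scale \<mu> v}"

definition invariant_sub ::
  "(complex \<Rightarrow> 'v::ab_group_add \<Rightarrow> 'v) \<Rightarrow> nat \<Rightarrow> ('v \<Rightarrow> 'v) \<Rightarrow> (nat \<Rightarrow> 'v \<Rightarrow> 'v) \<Rightarrow> ('v \<Rightarrow> 'v) \<Rightarrow> 'v set \<Rightarrow> bool" where
  "invariant_sub scale m H P Z S \<longleftrightarrow> module.subspace scale S \<and>
     (\<forall>v\<in>S. H v \<in> S \<and> Z v \<in> S \<and> (\<forall>k \<le> 2*m+1. P k v \<in> S))"

definition simple_mod ::
  "(complex \<Rightarrow> 'v::ab_group_add \<Rightarrow> 'v) \<Rightarrow> nat \<Rightarrow> ('v \<Rightarrow> 'v) \<Rightarrow> (nat \<Rightarrow> 'v \<Rightarrow> 'v) \<Rightarrow> ('v \<Rightarrow> 'v) \<Rightarrow> bool" where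
  "simple_mod scale m H P Z \<longleftrightarrow> (\<exists>v::'v. v \<noteq> 0) \<and>
     (\<forall>S. invariant_sub scale m H P Z S \<longrightarrow> S = {0} \<or> S = UNIV)"

definition weight_mod :: "(complex \<Rightarrow> 'v::ab_group_add \<Rightarrow> 'v) \<Rightarrow> ('v \<Rightarrow> 'v) \<Rightarrow> bool" where
  "weight_mod scale H \<longleftrightarrow> module.span scale (\<Union>\<mu>. weight_space scale H \<mu>) = UNIV"

definition supp :: "(complex \<Rightarrow> 'v::ab_group_add \<Rightarrow> 'v) \<Rightarrow> ('v \<Rightarrow> 'v) \<Rightarrow> complex set" where
  "supp scale H = {\<mu>. weight_space scale H \<mu> \<noteq> {0}}"

definition fin_dim_sub :: "(complex \<Rightarrow> 'v::ab_group_add \<Rightarrow> 'v) \<Rightarrow> 'v set \<Rightarrow> bool" where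
  "fin_dim_sub scale S \<longleftrightarrow> (\<exists>B. finite B \<and> B \<subseteq> S \<and> module.span scale B = S)"

definition gen_sub ::
  "(complex \<Rightarrow> 'v::ab_group_add \<Rightarrow> 'v) \<Rightarrow> nat \<Rightarrow> ('v \<Rightarrow> 'v) \<Rightarrow> (nat \<Rightarrow> 'v \<Rightarrow> 'v) \<Rightarrow> ('v \<Rightarrow> 'v) \<Rightarrow> 'v \<Rightarrow> 'v set" where
  "gen_sub scale m H P Z v = \<Inter>{S. invariant_sub scale m H P Z S \<and> v \<in> S}"

(* highest weight: generated by a weight vector killed by all p_k with k < l, i.e. k \<le> m *)
definition highest_weight_mod ::
  "(complex \<Rightarrow> 'v::ab_group_add \<Rightarrow> 'v) \<Rightarrow> nat \<Rightarrow> ('v \<Rightarrow> 'v) \<Rightarrow> (nat \<Rightarrow> 'v \<Rightarrow> 'v) \<Rightarrow> ('v \<Rightarrow> 'v) \<Rightarrow> bool" where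
  "highest_weight_mod scale m H P Z \<longleftrightarrow> (\<exists>v \<mu>. v \<noteq> 0 \<and> H v = scale \<mu> v \<and>
     (\<forall>k \<le> m. P k v = 0) \<and> gen_sub scale m H P Z v = UNIV)"

(* lowest weight: generated by a weight vector killed by all p_k with k > l, i.e. m+1 \<le> k \<le> 2m+1 *)
definition lowest_weight_mod ::
  "(complex \<Rightarrow> 'v::ab_group_add \<Rightarrow> 'v) \<Rightarrow> nat \<Rightarrow> ('v \<Rightarrow> 'v) \<Rightarrow> (nat \<Rightarrow> 'v \<Rightarrow> 'v) \<Rightarrow> ('v \<Rightarrow> 'v) \<Rightarrow> bool" where
  "lowest_weight_mod scale m H P Z \<longleftrightarrow> (\<exists>v \<mu>. v \<noteq> 0 \<and> H v = scale \<mu> v \<and>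
     (\<forall>k. m + 1 \<le> k \<and> k \<le> 2*m+1 \<longrightarrow> P k v = 0) \<and> gen_sub scale m H P Z v = UNIV)"

(* V (a module for l = 1/2, operators H, P 0, P 1, Z) is isomorphic to D(a, zd) with
   h x^i = (\<mu> - i) x^i: an isomorphism D(a,zd) \<rightarrow> V is the same as a basis (e i)_{i\<in>\<int>}
   of V (the images of the basis vectors x^i) on which the operators act as on x^i. *)
definition iso_D ::
  "(complex \<Rightarrow> 'v::ab_group_add \<Rightarrow> 'v) \<Rightarrow> ('v \<Rightarrow> 'v) \<Rightarrow> (nat \<Rightarrow> 'v \<Rightarrow> 'v) \<Rightarrow> ('v \<Rightarrow> 'v) \<Rightarrow> complex \<Rightarrow> complex \<Rightarrow> complex \<Rightarrow> bool" where
  "iso_D scale H P Z a zd \<mu> \<longleftrightarrow> (\<exists>e :: int \<Rightarrow> 'v.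
     inj e \<and> \<not> module.dependent scale (range e) \<and> module.span scale (range e) = UNIV \<and>
     (\<forall>i. P 1 (e i) = e (i + 1) \<and>
          P 0 (e i) = scale (- zd * (a + of_int i)) (e (i - 1)) \<and>
          Z (e i) = scale zd (e i) \<and>
          H (e i) = scale (\<mu> - of_int i) (e i)))"

end

theory Submission
  imports Defs "HOL-Computational_Algebra.Fundamental_Theorem_Algebra"
begin


lemma linear_add: "Vector_Spaces.linear s s f \<Longrightarrow> f (x + y) = f x + f y"
  by (simp add: Vector_Spaces.linear_iff)
lemma linear_scl: "Vector_Spaces.linear s s f \<Longrightarrow> f (s c x) = s c (f x)"
  by (simp add: Vector_Spaces.linear_iff)

locale CV = vector_space scale for scale :: "complex \<Rightarrow> 'v::ab_group_add \<Rightarrow> 'v" (infixr \<open>*s\<close> 75)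
begin

definition opoly :: "('v \<Rightarrow> 'v) \<Rightarrow> complex poly \<Rightarrow> 'v \<Rightarrow> 'v" where
  "opoly T p v = (\<Sum>i\<le>degree p. coeff p i *s (T^^i) v)"

lemma opoly_ext:
  assumes "degree p \<le> K"
  shows "opoly T p v = (\<Sum>i\<le>K. coeff p i *s (T^^i) v)"
  unfolding opoly_def
  by (rule sum.mono_neutral_left) (use assms in \<open>auto simp: coeff_eq_0\<close>)

lemma linear_zero: "Vector_Spaces.linear scale scale T \<Longrightarrow> T 0 = 0"
  by (metis Vector_Spaces.linear_iff scale_zero_left)

lemma linear_fun_sum: "Vector_Spaces.linear scale scale T \<Longrightarrow> T (sum g A) = (\<Sum>a\<in>A. T (g a))"
  by (induct A rule: infinite_finite_induct) (auto simp: Vector_Spaces.linear_iff linear_zero)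

lemma opoly_lin_factor:
  assumes lin: "Vector_Spaces.linear scale scale T"
  shows "opoly T ([:-r,1:] * q) v = T (opoly T q v) - r *s opoly T q v"
proof -
  have e: "[:-r,1:] * q = pCons 0 q - smult r q"
    by (simp add: mult_pCons_left)
  let ?K = "degree q"
  have dg: "degree ([:-r,1:] * q) \<le> Suc ?K"
    by (metis degree_mult_le degree_pCons_eq_if One_nat_def add.commute add_Suc_right degree_1 one_neq_zero plus_1_eq_Suc order_trans le_refl pCons_eq_0_iff)
  have "opoly T ([:-r,1:] * q) v = (\<Sum>i\<le>Suc ?K. coeff ([:-r,1:] * q) i *s (T^^i) v)"
    by (rule opoly_ext[OF dg])
  also have "\<dots> = (\<Sum>i\<le>Suc ?K. coeff (pCons 0 q) i *s (T^^i) v) - (\<Sum>i\<le>Suc ?K. (r * coeff q i) *s (T^^i) v)"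
    unfolding e by (simp add: scale_left_diff_distrib sum_subtractf)
  also have "(\<Sum>i\<le>Suc ?K. coeff (pCons 0 q) i *s (T^^i) v) = (\<Sum>i\<le>?K. coeff q i *s (T^^(Suc i)) v)"
    by (subst sum.atMost_Suc_shift) simp
  also have "\<dots> = T (opoly T q v)"
    unfolding opoly_def using lin by (simp add: linear_fun_sum Vector_Spaces.linear_iff)
  also have "(\<Sum>i\<le>Suc ?K. (r * coeff q i) *s (T^^i) v) = r *s opoly T q v"
    by (subst opoly_ext[of q "Suc ?K"]) (auto simp: scale_sum_right simp del: sum.atMost_Suc)
  finally show ?thesis .
qed

lemma funpow_in:
  assumes "\<forall>v\<in>W. T v \<in> W" "w \<in> W"
  shows "(T^^n) w \<in> W"
  by (induct n) (use assms in auto)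

lemma opoly_monom_diff:
  assumes "i \<noteq> j"
  shows "opoly T (monom 1 i - monom 1 j) w = (T^^i) w - (T^^j) w"
proof -
  have "degree (monom (1::complex) i - monom 1 j) \<le> max i j"
    by (metis degree_diff_le degree_monom_le le_trans max.cobounded1 max.cobounded2)
  hence "opoly T (monom 1 i - monom 1 j) w = (\<Sum>k\<le>max i j. ((if i = k then 1 else 0) - (if j = k then 1 else 0)) *s (T^^k) w)"
    by (subst opoly_ext) (auto simp: coeff_monom)
  also have "\<dots> = (\<Sum>k\<le>max i j. (if i = k then 1 else 0) *s (T^^k) w) - (\<Sum>k\<le>max i j. (if j = k then 1 else 0) *s (T^^k) w)"
    by (simp add: scale_left_diff_distrib sum_subtractf)
  also have "\<dots> = (T^^i) w - (T^^j) w"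
  proof -
    have d: "(\<Sum>k\<le>max i j. (if a = k then 1 else 0) *s (T^^k) w) = (T^^a) w" if "a \<le> max i j" for a
    proof -
      have "(\<Sum>k\<le>max i j. (if a = k then 1 else 0) *s (T^^k) w) = (\<Sum>k\<le>max i j. if a = k then (T^^k) w else 0)"
        by (rule sum.cong) auto
      also have "\<dots> = (T^^a) w" using that by (simp add: sum.delta)
      finally show ?thesis .
    qed
    show ?thesis using d[of i] d[of j] by simp
  qed
  finally show ?thesis .
qed

lemma ann_exists:
  assumes lin: "Vector_Spaces.linear scale scale T" and fin: "finite B"
    and st: "\<forall>v\<in>span B. T v \<in> span B" and w: "w \<in> span B"
  shows "\<exists>q. q \<noteq> 0 \<and> opoly T q w = 0"
proof -
  define n where "n = card B"
  define f where "f i = (T^^i) w" for i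
  have fin_span: "f i \<in> span B" for i unfolding f_def by (rule funpow_in[OF st w])
  show ?thesis
  proof (cases "inj_on f {..n}")
    case False
    then obtain i j where ij: "i \<noteq> j" "f i = f j" by (auto simp: inj_on_def)
    show ?thesis
    proof (intro exI conjI)
      show "monom (1::complex) i - monom 1 j \<noteq> 0"
        using ij(1) by (metis coeff_diff coeff_monom coeff_0 diff_zero one_neq_zero)
      show "opoly T (monom 1 i - monom 1 j) w = 0"
        using ij by (simp add: opoly_monom_diff f_def)
    qed
  next
    case True
    define S where "S = f ` {..n}"
    have cS: "card S = Suc n" unfolding S_def using True by (simp add: card_image)
    have fS: "finite S" unfolding S_def by simp
    have sub: "S \<subseteq> span B" unfolding S_def using fin_span by auto
    have "dependent S"
    proof (rule ccontr)
      assume "independent S"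
      from independent_span_bound[OF fin this sub] cS show False unfolding n_def by simp
    qed
    then obtain u where u: "\<exists>v\<in>S. u v \<noteq> 0" "(\<Sum>v\<in>S. u v *s v) = 0"
      using dependent_finite[OF fS] by auto
    define q where "q = (\<Sum>i\<le>n. monom (u (f i)) i)"
    have cq: "coeff q k = (if k \<le> n then u (f k) else 0)" for k
      unfolding q_def by (simp add: coeff_sum coeff_monom)
    have dq: "degree q \<le> n"
      by (rule degree_le) (simp add: cq)
    show ?thesis
    proof (intro exI conjI)
      show "q \<noteq> 0"
        using u(1) cq unfolding S_def by (metis atMost_iff coeff_0 imageE)
      have "opoly T q w = (\<Sum>i\<le>n. u (f i) *s f i)"
        by (subst opoly_ext[OF dq]) (simp add: cq f_def)
      also have "\<dots> = (\<Sum>v\<in>S. u v *s v)"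
        unfolding S_def by (subst sum.reindex[OF True]) simp
      finally show "opoly T q w = 0" using u(2) by simp
    qed
  qed
qed

lemma opoly_in:
  assumes "\<forall>v\<in>span B. T v \<in> span B" "w \<in> span B"
  shows "opoly T q w \<in> span B"
  unfolding opoly_def by (intro span_sum span_scale funpow_in[OF assms])

lemma eig_exists:
  assumes lin: "Vector_Spaces.linear scale scale T" and fin: "finite B"
    and st: "\<forall>v\<in>span B. T v \<in> span B" and w: "w \<in> span B" "w \<noteq> 0"
  shows "\<exists>v\<in>span B. v \<noteq> 0 \<and> (\<exists>r. T v = r *s v)"
proof -
  obtain q where q: "q \<noteq> 0" "opoly T q w = 0" using ann_exists[OF lin fin st w(1)] by blast
  have "\<forall>q. degree q = d \<longrightarrow> q \<noteq> 0 \<longrightarrow> opoly T q w = 0 \<longrightarrow> (\<exists>v\<in>span B. v \<noteq> 0 \<and> (\<exists>r. T v = r *s v))" for d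
  proof (induct d)
    case 0
    show ?case
    proof (intro allI impI)
      fix q :: "complex poly" assume a: "degree q = 0" "q \<noteq> 0" "opoly T q w = 0"
      then have "opoly T q w = coeff q 0 *s w" by (simp add: opoly_def)
      moreover have "coeff q 0 \<noteq> 0" using a by (metis leading_coeff_0_iff)
      ultimately show "\<exists>v\<in>span B. v \<noteq> 0 \<and> (\<exists>r. T v = r *s v)" using a w by simp
    qed
  next
    case (Suc d)
    show ?case
    proof (intro allI impI)
      fix q :: "complex poly" assume a: "degree q = Suc d" "q \<noteq> 0" "opoly T q w = 0"
      have "\<not> constant (poly q)"
      proof
        assume "constant (poly q)" then have "degree q = 0" using constant_degree by blast
        then show False using a(1) by simp
      qed
      then obtain r where "poly q r = 0" using fundamental_theorem_of_algebra by blast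
      then obtain q' where q': "q = [:-r,1:] * q'" by (auto simp: poly_eq_0_iff_dvd elim: dvdE)
      have q'0: "q' \<noteq> 0" using a(2) q' by auto
      have "degree q = degree [:-r,1:] + degree q'" unfolding q' by (rule degree_mult_eq) (use q'0 in auto)
      hence dq': "degree q' = d" using a(1) by simp
      define x where "x = opoly T q' w"
      have xin: "x \<in> span B" unfolding x_def by (rule opoly_in[OF st w(1)])
      have ex: "T x - r *s x = 0" using a(3) unfolding q' x_def opoly_lin_factor[OF lin] .
      show "\<exists>v\<in>span B. v \<noteq> 0 \<and> (\<exists>r. T v = r *s v)"
      proof (cases "x = 0")
        case True
        then show ?thesis using Suc[rule_format, OF dq' q'0] x_def by simp
      next
        case False
        then show ?thesis using xin ex by (intro bexI[of _ x]) auto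
      qed
    qed
  qed
  then show ?thesis using q by blast
qed

lemma eig_indep_set:
  assumes lin: "Vector_Spaces.linear scale scale T"
    and ev: "\<forall>v\<in>S. v \<noteq> 0 \<and> T v = e v *s v" and inj: "inj_on e S"
  shows "independent S"
proof -
  have "\<forall>u. (\<Sum>v\<in>t. u v *s v) = 0 \<longrightarrow> (\<forall>v\<in>t. u v = 0)" if "finite t" "t \<subseteq> S" for t
    using that
  proof (induct t rule: finite_induct)
    case empty then show ?case by simp
  next
    case (insert a t)
    show ?case
    proof (intro allI impI)
      have tS: "t \<subseteq> S" using insert(4) by auto
      have IH: "\<And>w. (\<Sum>v\<in>t. w v *s v) = 0 \<Longrightarrow> \<forall>v\<in>t. w v = 0" using insert(3)[OF tS] by blast
      fix u assume s0: "(\<Sum>v\<in>insert a t. u v *s v) = 0"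
      have sa: "u a *s a + (\<Sum>v\<in>t. u v *s v) = 0" using s0 insert by simp
      define A where "A = (\<Sum>v\<in>t. u v *s v)"
      define B where "B = (\<Sum>v\<in>t. (e v * u v) *s v)"
      have T0: "T (u a *s a + A) = 0" using sa linear_zero[OF lin] unfolding A_def by simp
      have "T (u a *s a + A) = (e a * u a) *s a + B"
        proof -
        have "T (u a *s a + A) = u a *s T a + (\<Sum>v\<in>t. u v *s T v)"
          unfolding A_def using lin by (simp add: linear_add linear_scl linear_fun_sum)
        also have "\<dots> = (e a * u a) *s a + B"
        proof -
          have "(\<Sum>v\<in>t. u v *s T v) = B"
            unfolding B_def by (rule sum.cong) (use ev insert(4) in \<open>auto simp: mult.commute\<close>)
          moreover have "u a *s T a = (e a * u a) *s a" using ev insert(4) by (simp add: mult.commute)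
          ultimately show ?thesis by simp
        qed
        finally show ?thesis .
      qed
      hence B1: "B = - ((e a * u a) *s a)" using T0 by (simp add: eq_neg_iff_add_eq_0 add.commute)
      have ua: "u a *s a = - A" using sa unfolding A_def by (simp add: eq_neg_iff_add_eq_0)
      have "(e a * u a) *s a = e a *s (u a *s a)" by simp
      also have "\<dots> = - (e a *s A)" using ua by (simp add: scale_minus_right)
      finally have "B = e a *s A" using B1 by simp
      also have "e a *s A = (\<Sum>v\<in>t. (e a * u v) *s v)" unfolding A_def by (simp add: scale_sum_right)
      finally have "(\<Sum>v\<in>t. (e v * u v) *s v) - (\<Sum>v\<in>t. (e a * u v) *s v) = 0" unfolding B_def by simp
      hence "(\<Sum>v\<in>t. ((e v - e a) * u v) *s v) = 0"
        by (simp add: sum_subtractf[symmetric] scale_left_diff_distrib[symmetric] left_diff_distrib)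
      hence z: "\<forall>v\<in>t. (e v - e a) * u v = 0" by (rule IH)
      have "\<forall>v\<in>t. u v = 0"
      proof
        fix v assume v: "v \<in> t"
        have "v \<noteq> a" "v \<in> S" "a \<in> S" using insert(2,4) v by auto
        hence "e v \<noteq> e a" using inj unfolding inj_on_def by blast
        then show "u v = 0" using z v by auto
      qed
      then have "u a *s a = 0" using sa by simp
      moreover have "a \<noteq> 0" using ev insert(4) by auto
      ultimately have "u a = 0" by simp
      then show "\<forall>v\<in>insert a t. u v = 0" using \<open>\<forall>v\<in>t. u v = 0\<close> by simp
    qed
  qed
  then show ?thesis unfolding dependent_explicit by blast
qed

lemma eig_indep_fam:
  assumes lin: "Vector_Spaces.linear scale scale T"
    and ev: "\<forall>i\<in>I. f i \<noteq> 0 \<and> T (f i) = e i *s f i" and inj: "inj_on e I"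
  shows "independent (f ` I)" "inj_on f I"
proof -
  show injf: "inj_on f I"
  proof (rule inj_onI)
    fix i j assume ij: "i \<in> I" "j \<in> I" "f i = f j"
    then have "e i *s f i = e j *s f i" using ev by metis
    then have "(e i - e j) *s f i = 0" by (simp add: scale_left_diff_distrib)
    then have "e i = e j" using ev ij by auto
    then show "i = j" using inj ij by (simp add: inj_on_def)
  qed
  define e' where "e' v = e (the_inv_into I f v)" for v
  have e': "e' (f i) = e i" if "i \<in> I" for i using the_inv_into_f_f[OF injf that] by (simp add: e'_def)
  show "independent (f ` I)"
  proof (rule eig_indep_set[OF lin, of _ e'])
    show "\<forall>v\<in>f ` I. v \<noteq> 0 \<and> T v = e' v *s v" using ev e' by auto
    show "inj_on e' (f ` I)" using inj e' by (auto simp: inj_on_def)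
  qed
qed

end



context CV begin
lemma linear_funpow: "Vector_Spaces.linear scale scale T \<Longrightarrow> Vector_Spaces.linear scale scale (T^^n)"
proof -
  assume lin: "Vector_Spaces.linear scale scale T"
  have a: "(T^^n) (x + y) = (T^^n) x + (T^^n) y" for x y
    by (induct n) (auto simp: linear_add[OF lin])
  have b: "(T^^n) (c *s x) = c *s (T^^n) x" for c x
    by (induct n) (auto simp: linear_scl[OF lin])
  show ?thesis using a b vector_space_axioms by (simp add: Vector_Spaces.linear_iff)
qed
end

locale HM = CV scale for scale :: "complex \<Rightarrow> 'v::ab_group_add \<Rightarrow> 'v" (infixr \<open>*s\<close> 75) +
  fixes m :: nat and H Z :: "'v \<Rightarrow> 'v" and P :: "nat \<Rightarrow> 'v \<Rightarrow> 'v" and zd :: complex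
  assumes hmod: "is_hmod scale m H P Z" and simple: "simple_mod scale m H P Z"
    and wm: "weight_mod scale H" and zd0: "zd \<noteq> 0" and Zd: "\<forall>v. Z v = zd *s v"
begin

definition sh :: "nat \<Rightarrow> complex" where "sh k = 2 * of_nat m + 1 - 2 * of_nat k"
definition bc :: "nat \<Rightarrow> nat \<Rightarrow> complex" where
  "bc k k' = (if k + k' = 2*m+1 then heis_coeff m k else 0) * zd"
definition LN :: "nat \<Rightarrow> bool" where "LN k \<longleftrightarrow> (\<forall>v. \<exists>n. (P k ^^ n) v = 0)"

lemma linH: "Vector_Spaces.linear scale scale H" using hmod by (simp add: is_hmod_def)
lemma linP: "k \<le> 2*m+1 \<Longrightarrow> Vector_Spaces.linear scale scale (P k)" using hmod by (simp add: is_hmod_def)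
lemma linPn: "k \<le> 2*m+1 \<Longrightarrow> Vector_Spaces.linear scale scale (P k ^^ n)" by (rule linear_funpow[OF linP])

lemma HP0: "\<forall>k \<le> 2*m+1. \<forall>v. H (P k v) - P k (H v) = (2 * of_nat m + 1 - 2 * of_nat k) *s (P k v)"
  using hmod unfolding is_hmod_def by (elim conjE) assumption

lemma PP0: "\<forall>k \<le> 2*m+1. \<forall>k' \<le> 2*m+1. \<forall>v.
        P k (P k' v) - P k' (P k v) = (if k + k' = 2*m+1 then heis_coeff m k else 0) *s (Z v)"
  using hmod unfolding is_hmod_def by (elim conjE) assumption

lemma HP: "k \<le> 2*m+1 \<Longrightarrow> H (P k v) = P k (H v) + sh k *s P k v"
proof -
  assume "k \<le> 2*m+1"
  then have "H (P k v) - P k (H v) = sh k *s P k v" using HP0 unfolding sh_def by blast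
  then show ?thesis by (simp add: diff_eq_eq add.commute)
qed

lemma PP: "k \<le> 2*m+1 \<Longrightarrow> k' \<le> 2*m+1 \<Longrightarrow> P k (P k' v) = P k' (P k v) + bc k k' *s v"
proof -
  assume a: "k \<le> 2*m+1" "k' \<le> 2*m+1"
  have "P k (P k' v) - P k' (P k v) = (if k + k' = 2*m+1 then heis_coeff m k else 0) *s (Z v)"
    using PP0 a by blast
  also have "\<dots> = bc k k' *s v" using Zd by (simp add: bc_def)
  finally show ?thesis by (simp add: diff_eq_eq add.commute)
qed

lemma heis_nz: "heis_coeff m k \<noteq> 0"
  by (simp add: heis_coeff_def)

lemma bc_nz: "k + k' = 2*m+1 \<Longrightarrow> bc k k' \<noteq> 0"
  using zd0 heis_nz by (simp add: bc_def)

lemma bc_z: "k + k' \<noteq> 2*m+1 \<Longrightarrow> bc k k' = 0"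
  by (simp add: bc_def)

lemma HPn: "k \<le> 2*m+1 \<Longrightarrow> H ((P k ^^ n) v) = (P k ^^ n) (H v) + (of_nat n * sh k) *s (P k ^^ n) v"
proof (induct n)
  case 0 then show ?case by simp
next
  case (Suc n)
  have "H ((P k ^^ Suc n) v) = P k (H ((P k ^^ n) v)) + sh k *s (P k ^^ Suc n) v"
    using HP[OF Suc.prems] by simp
  also have "\<dots> = (P k ^^ Suc n) (H v) + (of_nat n * sh k) *s (P k ^^ Suc n) v + sh k *s (P k ^^ Suc n) v"
    using Suc linP[OF Suc.prems] by (simp add: linear_add linear_scl)
  also have "\<dots> = (P k ^^ Suc n) (H v) + (of_nat (Suc n) * sh k) *s (P k ^^ Suc n) v"
    by (simp add: algebra_simps scale_left_distrib)
  finally show ?case .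
qed

lemma weight_shift:
  assumes "k \<le> 2*m+1" "H v = \<mu> *s v"
  shows "H ((P k ^^ n) v) = (\<mu> + of_nat n * sh k) *s (P k ^^ n) v"
  using HPn[OF assms(1)] assms linear_scl[OF linPn[OF assms(1)]] by (simp add: scale_left_distrib)

lemma PPn:
  assumes "a \<le> 2*m+1" "b \<le> 2*m+1"
  shows "P a ((P b ^^ Suc n) v) = (P b ^^ Suc n) (P a v) + (of_nat (Suc n) * bc a b) *s (P b ^^ n) v"
proof (induct n)
  case 0 then show ?case using PP[OF assms] by simp
next
  case (Suc n)
  have "P a ((P b ^^ Suc (Suc n)) v) = P b (P a ((P b ^^ Suc n) v)) + bc a b *s (P b ^^ Suc n) v"
    using PP[OF assms] by simp
  also have "\<dots> = (P b ^^ Suc (Suc n)) (P a v) + (of_nat (Suc n) * bc a b) *s (P b ^^ Suc n) v + bc a b *s (P b ^^ Suc n) v"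
    using Suc linP[OF assms(2)] by (simp add: linear_add linear_scl)
  also have "\<dots> = (P b ^^ Suc (Suc n)) (P a v) + (of_nat (Suc (Suc n)) * bc a b) *s (P b ^^ Suc n) v"
  proof -
    have e: "of_nat (Suc (Suc n)) * bc a b = of_nat (Suc n) * bc a b + bc a b" by (simp add: algebra_simps)
    show ?thesis unfolding e scale_left_distrib by (simp add: add.assoc)
  qed
  finally show ?case .
qed

lemma PPn_comm:
  assumes "a \<le> 2*m+1" "b \<le> 2*m+1" "a + b \<noteq> 2*m+1"
  shows "P a ((P b ^^ n) v) = (P b ^^ n) (P a v)"
proof (cases n)
  case 0 then show ?thesis by simp
next
  case (Suc n') then show ?thesis using PPn[OF assms(1,2), of n' v] bc_z[OF assms(3)] by simp
qed

lemma inv_univ: "invariant_sub scale m H P Z S \<Longrightarrow> S \<noteq> {0} \<Longrightarrow> S = UNIV"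
  using simple unfolding simple_mod_def by blast

lemma gen_univ: "v \<noteq> 0 \<Longrightarrow> gen_sub scale m H P Z v = UNIV"
  unfolding gen_sub_def using inv_univ by blast

lemma nonzero: "\<exists>v::'v. v \<noteq> 0" using simple by (simp add: simple_mod_def)

lemma weight_vec: "\<exists>w \<mu>. w \<noteq> 0 \<and> H w = \<mu> *s w"
proof (rule ccontr)
  assume "\<not> ?thesis"
  then have "(\<Union>\<mu>. weight_space scale H \<mu>) \<subseteq> {0}" by (auto simp: weight_space_def)
  moreover have "subspace {0}" by (simp add: subspace_def)
  ultimately have "span (\<Union>\<mu>. weight_space scale H \<mu>) \<subseteq> {0}" by (rule span_minimal)
  then show False using wm nonzero by (auto simp: weight_mod_def)
qed

lemma LN_of_kernel:
  assumes k: "k \<le> 2*m+1" and v0: "v0 \<noteq> 0" "P k v0 = 0"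
  shows "LN k"
proof -
  define S where "S = {v. \<exists>n. (P k ^^ n) v = 0}"
  have lk: "Vector_Spaces.linear scale scale (P k ^^ n)" for n by (rule linPn[OF k])
  have z: "(P k ^^ n) 0 = 0" for n using linear_zero[OF lk] .
  have up: "(P k ^^ (j + n)) v = 0" if "(P k ^^ n) v = 0" for n j v
    using that z[of j] by (simp add: funpow_add)
  have Sin: "v \<in> S" if "(P k ^^ n) v = 0" for v n unfolding S_def using that by blast
  have "invariant_sub scale m H P Z S"
    unfolding invariant_sub_def
  proof (intro conjI ballI allI impI)
    show "subspace S"
    proof (rule subspaceI)
      show "0 \<in> S" by (rule Sin[of 0 0]) simp
      fix x y assume "x \<in> S" "y \<in> S"
      then obtain a b where "(P k ^^ a) x = 0" "(P k ^^ b) y = 0" unfolding S_def by blast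
      then have "(P k ^^ (b + a)) x = 0" "(P k ^^ (a + b)) y = 0" using up[of a x b] up[of b y a] by auto
      then have "(P k ^^ (a + b)) (x + y) = 0" using linear_add[OF lk, of "a+b" x y] by (simp add: add.commute)
      then show "x + y \<in> S" by (rule Sin)
    next
      fix c x assume "x \<in> S"
      then obtain a where "(P k ^^ a) x = 0" unfolding S_def by blast
      then have "(P k ^^ a) (c *s x) = 0" using linear_scl[OF lk, of a c x] by simp
      then show "c *s x \<in> S" by (rule Sin)
    qed
  next
    fix v assume "v \<in> S"
    then obtain n where n: "(P k ^^ n) v = 0" unfolding S_def by blast
    have "H ((P k ^^ n) v) = (P k ^^ n) (H v) + (of_nat n * sh k) *s (P k ^^ n) v" by (rule HPn[OF k])
    then have "H 0 = (P k ^^ n) (H v) + (of_nat n * sh k) *s 0" by (simp only: n)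
    then have "(P k ^^ n) (H v) = 0" by (simp add: linear_zero[OF linH])
    then show "H v \<in> S" by (rule Sin)
    have "(P k ^^ n) (Z v) = 0" using Zd n linear_scl[OF lk, of n zd v] by simp
    then show "Z v \<in> S" by (rule Sin)
    fix k' assume k': "k' \<le> 2*m+1"
    have "P k' ((P k ^^ Suc n) v) = (P k ^^ Suc n) (P k' v) + (of_nat (Suc n) * bc k' k) *s (P k ^^ n) v"
      by (rule PPn[OF k' k])
    moreover have "(P k ^^ Suc n) v = 0" using n z[of 1] by simp
    ultimately have "P k' 0 = (P k ^^ Suc n) (P k' v) + (of_nat (Suc n) * bc k' k) *s 0" using n by (simp only:)
    then have "(P k ^^ Suc n) (P k' v) = 0" by (simp add: linear_zero[OF linP[OF k']])
    then show "P k' v \<in> S" by (rule Sin)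
  qed
  moreover have "S \<noteq> {0}"
  proof
    assume "S = {0}"
    moreover have "v0 \<in> S" by (rule Sin[of 1 v0]) (simp add: v0)
    ultimately show False using v0 by simp
  qed
  ultimately have "S = UNIV" by (rule inv_univ)
  show ?thesis unfolding LN_def
  proof
    fix v
    have "v \<in> S" using \<open>S = UNIV\<close> by simp
    then show "\<exists>n. (P k ^^ n) v = 0" unfolding S_def by simp
  qed
qed

lemma inj_of_notLN:
  assumes "k \<le> 2*m+1" "\<not> LN k" "(P k ^^ n) v = 0"
  shows "v = 0"
  using assms(3)
proof (induct n arbitrary: v)
  case 0 then show ?case by simp
next
  case (Suc n)
  then have "P k v = 0" by (metis funpow_Suc_right o_apply)
  then show ?case using LN_of_kernel assms(1,2) by blast
qed

lemma ex_killed: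
  assumes "(P k ^^ n) v = 0" "v \<noteq> 0"
  shows "\<exists>j. (P k ^^ j) v \<noteq> 0 \<and> P k ((P k ^^ j) v) = 0"
  using assms
proof (induct n arbitrary: v)
  case 0 then show ?case by simp
next
  case (Suc n)
  show ?case
  proof (cases "P k v = 0")
    case True then show ?thesis using Suc by (intro exI[of _ 0]) auto
  next
    case False
    have "(P k ^^ n) (P k v) = 0" using Suc(2) by (metis funpow_Suc_right o_apply)
    then obtain j where "(P k ^^ j) (P k v) \<noteq> 0 \<and> P k ((P k ^^ j) (P k v)) = 0"
      using Suc(1) False by blast
    then show ?thesis by (intro exI[of _ "Suc j"]) (simp add: funpow_Suc_right del: funpow.simps)
  qed
qed

lemma not_both_LN:
  assumes k: "k \<le> 2*m+1" and k': "k' = 2*m+1-k" and l1: "LN k" and l2: "LN k'"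
  shows False
proof -
  obtain v :: 'v where v: "v \<noteq> 0" using nonzero by blast
  obtain n where "(P k ^^ n) v = 0" using l1 unfolding LN_def by blast
  then obtain j where j: "(P k ^^ j) v \<noteq> 0" "P k ((P k ^^ j) v) = 0" using ex_killed v by blast
  define w where "w = (P k ^^ j) v"
  have k'b: "k' \<le> 2*m+1" using k' by simp
  have bnz: "bc k k' \<noteq> 0" using k k' by (intro bc_nz) simp
  have "(P k' ^^ n) w \<noteq> 0" for n
  proof (induct n)
    case 0 then show ?case using j w_def by simp
  next
    case (Suc n)
    have "P k ((P k' ^^ Suc n) w) = (P k' ^^ Suc n) (P k w) + (of_nat (Suc n) * bc k k') *s (P k' ^^ n) w"
      by (rule PPn[OF k k'b])
    also have "(P k' ^^ Suc n) (P k w) = 0" using j linear_zero[OF linPn[OF k'b]] unfolding w_def by metis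
    finally have e: "P k ((P k' ^^ Suc n) w) = (of_nat (Suc n) * bc k k') *s (P k' ^^ n) w" by simp
    show ?case
    proof
      assume "(P k' ^^ Suc n) w = 0"
      then have "(of_nat (Suc n) * bc k k') *s (P k' ^^ n) w = 0" using e linear_zero[OF linP[OF k]] by simp
      then show False using Suc bnz by (simp del: of_nat_Suc)
    qed
  qed
  moreover obtain N where "(P k' ^^ N) w = 0" using l2 unfolding LN_def by blast
  ultimately show False by blast
qed

lemma common_killed:
  assumes "finite K" "K \<subseteq> {..2*m+1}" "\<forall>k\<in>K. \<forall>k'\<in>K. k + k' \<noteq> 2*m+1" "\<forall>k\<in>K. LN k"
  shows "\<exists>v \<mu>. v \<noteq> 0 \<and> H v = \<mu> *s v \<and> (\<forall>k\<in>K. P k v = 0)"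
  using assms
proof (induct K rule: finite_induct)
  case empty then show ?case using weight_vec by auto
next
  case (insert k K)
  then obtain v \<mu> where v: "v \<noteq> 0" "H v = \<mu> *s v" "\<forall>k\<in>K. P k v = 0" by auto
  have kb: "k \<le> 2*m+1" using insert by auto
  obtain n where "(P k ^^ n) v = 0" using insert(6) unfolding LN_def by blast
  then obtain j where j: "(P k ^^ j) v \<noteq> 0" "P k ((P k ^^ j) v) = 0" using ex_killed v by blast
  show ?case
  proof (intro exI conjI)
    show "(P k ^^ j) v \<noteq> 0" by (rule j(1))
    show "H ((P k ^^ j) v) = (\<mu> + of_nat j * sh k) *s (P k ^^ j) v" by (rule weight_shift[OF kb v(2)])
    show "\<forall>k'\<in>insert k K. P k' ((P k ^^ j) v) = 0"
    proof
      fix k' assume k': "k' \<in> insert k K"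
      show "P k' ((P k ^^ j) v) = 0"
      proof (cases "k' = k")
        case True then show ?thesis using j by simp
      next
        case False
        then have k'K: "k' \<in> K" using k' by simp
        have "P k' ((P k ^^ j) v) = (P k ^^ j) (P k' v)"
          using insert(4,5) k'K kb by (intro PPn_comm) auto
        then show ?thesis using v(3) k'K linear_zero[OF linPn[OF kb]] by simp
      qed
    qed
  qed
qed

lemma highest: "\<forall>k\<le>m. LN k \<Longrightarrow> highest_weight_mod scale m H P Z"
proof -
  assume a: "\<forall>k\<le>m. LN k"
  obtain v \<mu> where v: "v \<noteq> 0" "H v = \<mu> *s v" "\<forall>k\<in>{..m}. P k v = 0"
    using common_killed[of "{..m}"] a by auto
  show ?thesis unfolding highest_weight_mod_def
    using v gen_univ[OF v(1)] by (intro exI[of _ v] exI[of _ \<mu>]) simp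
qed

lemma lowest: "\<forall>k. m+1 \<le> k \<and> k \<le> 2*m+1 \<longrightarrow> LN k \<Longrightarrow> lowest_weight_mod scale m H P Z"
proof -
  assume a: "\<forall>k. m+1 \<le> k \<and> k \<le> 2*m+1 \<longrightarrow> LN k"
  obtain v \<mu> where v: "v \<noteq> 0" "H v = \<mu> *s v" "\<forall>k\<in>{m+1..2*m+1}. P k v = 0"
    using common_killed[of "{m+1..2*m+1}"] a by auto
  show ?thesis unfolding lowest_weight_mod_def
    using v gen_univ[OF v(1)] by (intro exI[of _ v] exI[of _ \<mu>]) simp
qed

end


context HM begin

lemma wsp_nz:
  assumes "w \<noteq> 0" "H w = \<mu> *s w" "supp scale H \<subseteq> {lam + of_int n | n. True}"
  shows "\<exists>t. \<mu> = lam + of_int t"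
proof -
  have "\<mu> \<in> supp scale H" using assms(1,2) by (auto simp: supp_def weight_space_def)
  then show ?thesis using assms(3) by auto
qed

lemma core2:
  assumes kx: "kx \<le> m" and ju: "m+1 \<le> ju" "ju \<le> 2*m+1"
    and nx: "\<not> LN kx" and nu: "\<not> LN ju" and ne: "kx + ju \<noteq> 2*m+1"
    and one: "kx = m \<or> ju = m+1"
    and sup: "supp scale H \<subseteq> {lam + of_int n | n. True}"
    and fd: "fin_dim_sub scale (weight_space scale H lam)"
  shows False
proof -
  define ky where "ky = 2*m+1-kx"
  define dn where "dn = 2*m+1-2*kx"
  define dn' where "dn' = 2*ju - (2*m+1)"
  have kxb: "kx \<le> 2*m+1" and kyb: "ky \<le> 2*m+1" using kx by (auto simp: ky_def)
  have dn1: "dn \<ge> 1" "dn' \<ge> 1" using kx ju by (auto simp: dn_def dn'_def)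
  have shx: "sh kx = of_nat dn" using kx by (simp add: sh_def dn_def of_nat_diff)
  have shu: "sh ju = - of_nat dn'" using ju by (simp add: sh_def dn'_def of_nat_diff)
  have shy: "sh ky = - of_nat dn" using kx by (simp add: sh_def dn_def ky_def of_nat_diff)
  define x where "x = P kx"
  define u where "u = P ju"
  define y where "y = P ky"
  define X where "X v = (x^^dn') ((u^^dn) v)" for v
  define N where "N v = y (x v)" for v
  have linx: "Vector_Spaces.linear scale scale (x^^n)" for n unfolding x_def by (rule linPn[OF kxb])
  have linu: "Vector_Spaces.linear scale scale (u^^n)" for n unfolding u_def by (rule linPn[OF ju(2)])
  have linx1: "Vector_Spaces.linear scale scale x" unfolding x_def by (rule linP[OF kxb])
  have liny: "Vector_Spaces.linear scale scale y" unfolding y_def by (rule linP[OF kyb])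
  have linX: "Vector_Spaces.linear scale scale X"
    using linx linu vector_space_axioms unfolding X_def by (simp add: Vector_Spaces.linear_iff)
  have linN: "Vector_Spaces.linear scale scale N"
    using linx1 liny vector_space_axioms unfolding N_def by (simp add: Vector_Spaces.linear_iff)
  have wx: "H ((x^^n) v) = (\<mu> + of_nat n * of_nat dn) *s (x^^n) v" if "H v = \<mu> *s v" for n v \<mu>
    using weight_shift[OF kxb that] shx unfolding x_def by simp
  have wu: "H ((u^^n) v) = (\<mu> - of_nat n * of_nat dn') *s (u^^n) v" if "H v = \<mu> *s v" for n v \<mu>
    using weight_shift[OF ju(2) that] shu unfolding u_def by simp
  have wy: "H (y v) = (\<mu> - of_nat dn) *s y v" if "H v = \<mu> *s v" for v \<mu>
    using weight_shift[OF kyb that, of 1] shy unfolding y_def by simp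
  have WX: "H (X v) = \<mu> *s X v" if "H v = \<mu> *s v" for v \<mu>
  proof -
    have "H (X v) = ((\<mu> - of_nat dn * of_nat dn') + of_nat dn' * of_nat dn) *s X v"
      unfolding X_def by (rule wx[OF wu[OF that]])
    then show ?thesis by (simp add: mult.commute)
  qed
  have WN: "H (N v) = \<mu> *s N v" if "H v = \<mu> *s v" for v \<mu>
    using wy[OF wx[OF that, of 1]] unfolding N_def by simp
  have injx: "(x^^n) v = 0 \<Longrightarrow> v = 0" for n v unfolding x_def using inj_of_notLN[OF kxb nx] by blast
  have inju: "(u^^n) v = 0 \<Longrightarrow> v = 0" for n v unfolding u_def using inj_of_notLN[OF ju(2) nu] by blast
  have injX: "X v = 0 \<Longrightarrow> v = 0" for v unfolding X_def using injx inju by blast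
  have xu: "x ((u^^n) v) = (u^^n) (x v)" for n v
    unfolding x_def u_def by (rule PPn_comm[OF kxb ju(2) ne])
  have yu: "y ((u^^n) v) = (u^^n) (y v)" for n v
    unfolding y_def u_def using kx ju by (intro PPn_comm[OF kyb ju(2)]) (auto simp: ky_def)
  obtain e where e: "dn' = Suc e" using dn1 by (cases dn') auto
  define s where "s = of_nat dn' * bc ky kx"
  have snz: "s \<noteq> 0" unfolding s_def using dn1 bc_nz[of ky kx] kx by (auto simp: ky_def)
  have NX: "N (X v) = X (N v) + s *s X v" for v
  proof -
    have "N (X v) = y ((x^^dn') (x ((u^^dn) v)))" unfolding N_def X_def by (simp add: funpow_swap1)
    also have "\<dots> = y ((x^^Suc e) ((u^^dn) (x v)))" by (simp add: xu e)
    also have "\<dots> = (x^^Suc e) (y ((u^^dn) (x v))) + (of_nat (Suc e) * bc ky kx) *s (x^^e) ((u^^dn) (x v))"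
      unfolding x_def y_def by (rule PPn[OF kyb kxb])
    also have "y ((u^^dn) (x v)) = (u^^dn) (N v)" by (simp add: yu N_def)
    also have "(x^^e) ((u^^dn) (x v)) = X v"
      unfolding X_def e by (simp add: xu[symmetric] funpow_Suc_right del: funpow.simps)
    finally show ?thesis unfolding X_def s_def e .
  qed
  obtain B where B: "finite B" "B \<subseteq> weight_space scale H lam" "span B = weight_space scale H lam"
    using fd unfolding fin_dim_sub_def by blast
  have inW: "v \<in> span B \<longleftrightarrow> H v = lam *s v" for v using B(3) by (simp add: weight_space_def)
  obtain w0 \<mu> where w0: "w0 \<noteq> 0" "H w0 = \<mu> *s w0" using weight_vec by blast
  obtain t where t: "\<mu> = lam + of_int t" using wsp_nz[OF w0 sup] by blast
  obtain a b :: nat where ab: "of_int t + of_nat a * of_nat dn - of_nat b * of_nat dn' = (0::complex)"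
  proof (cases "kx = m")
    case True
    then have "dn = 1" by (simp add: dn_def)
    define b where "b = nat \<bar>t\<bar>"
    have "\<bar>t\<bar> * 1 \<le> \<bar>t\<bar> * int dn'" by (rule mult_left_mono) (use dn1 in auto)
    then have "int b * int dn' \<ge> t" unfolding b_def by simp
    then show ?thesis using \<open>dn = 1\<close>
      by (intro that[of "nat (int b * int dn' - t)" b]) (simp add: of_nat_nat)
  next
    case False
    then have "dn' = 1" using one by (simp add: dn'_def)
    define a where "a = nat \<bar>t\<bar>"
    have "\<bar>t\<bar> * 1 \<le> \<bar>t\<bar> * int dn" by (rule mult_left_mono) (use dn1 in auto)
    then have "int a * int dn \<ge> - t" unfolding a_def by simp
    then show ?thesis using \<open>dn' = 1\<close>
      by (intro that[of a "nat (t + int a * int dn)"]) (simp add: of_nat_nat)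
  qed
  define v1 where "v1 = (x^^a) ((u^^b) w0)"
  have v1W: "H v1 = lam *s v1"
  proof -
    have "H v1 = ((\<mu> - of_nat b * of_nat dn') + of_nat a * of_nat dn) *s v1"
      unfolding v1_def by (rule wx[OF wu[OF w0(2)]])
    moreover have "(\<mu> - of_nat b * of_nat dn') + of_nat a * of_nat dn = lam"
    proof -
      have "of_int t = of_nat b * of_nat dn' - of_nat a * (of_nat dn::complex)" using ab by (simp add: algebra_simps)
      then show ?thesis using t by simp
    qed
    ultimately show ?thesis by simp
  qed
  have v1nz: "v1 \<noteq> 0" unfolding v1_def using injx inju w0(1) by blast
  have stN: "\<forall>v\<in>span B. N v \<in> span B" using WN inW by blast
  have v1B: "v1 \<in> span B" using inW v1W by blast
  obtain v0 r where v0: "v0 \<in> span B" "v0 \<noteq> 0" "N v0 = r *s v0"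
    using eig_exists[OF linN B(1) stN v1B v1nz] by blast
  define f where "f n = (X^^n) v0" for n
  have fB: "f n \<in> span B" for n unfolding f_def using WX inW v0(1) by (intro funpow_in) blast+
  have fnz: "f n \<noteq> 0" for n unfolding f_def
  proof (induct n)
    case 0 then show ?case using v0 by simp
  next
    case (Suc n) then show ?case using injX by (metis funpow.simps(2) o_apply)
  qed
  have fev: "N (f n) = (r + of_nat n * s) *s f n" for n
  proof (induct n)
    case 0 then show ?case using v0 by (simp add: f_def)
  next
    case (Suc n)
    have "N (f (Suc n)) = X (N (f n)) + s *s X (f n)" unfolding f_def using NX by simp
    also have "\<dots> = (r + of_nat n * s) *s X (f n) + s *s X (f n)" using Suc linear_scl[OF linX] by simp
    also have "\<dots> = ((r + of_nat n * s) + s) *s X (f n)" by (simp only: scale_left_distrib)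
    also have "(r + of_nat n * s) + s = r + of_nat (Suc n) * s" by (simp add: algebra_simps)
    also have "X (f n) = f (Suc n)" unfolding f_def by simp
    finally show ?case .
  qed
  have injev: "inj_on (\<lambda>n. r + of_nat n * s) UNIV" using snz by (auto simp: inj_on_def)
  have ind: "independent (range f)" and injf: "inj_on f UNIV"
    using eig_indep_fam[OF linN, of UNIV f "\<lambda>n. r + of_nat n * s"] fnz fev injev by auto
  have "finite (range f)" using independent_span_bound[OF B(1) ind] fB by auto
  then show False using injf finite_imageD by (metis infinite_UNIV_nat)
qed

lemma part2:
  assumes m1: "m \<ge> 1"
    and sup: "supp scale H \<subseteq> {lam + of_int n | n. True}"
    and fd: "fin_dim_sub scale (weight_space scale H lam)"
    and nh: "\<not> (\<forall>k\<le>m. LN k)" and nl: "\<not> (\<forall>k. m+1 \<le> k \<and> k \<le> 2*m+1 \<longrightarrow> LN k)"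
  shows False
proof -
  obtain k0 where k0: "k0 \<le> m" "\<not> LN k0" using nh by blast
  obtain j0 where j0: "m+1 \<le> j0" "j0 \<le> 2*m+1" "\<not> LN j0" using nl by blast
  show False
  proof (cases "LN m")
    case False
    show False
    proof (cases "j0 = m+1")
      case False
      show False by (rule core2[of m j0]) (use \<open>\<not> LN m\<close> j0 False sup fd in auto)
    next
      case True
      have "\<not> LN 0 \<or> \<not> LN (2*m+1)" using not_both_LN[of 0 "2*m+1"] by auto
      then show False
      proof
        assume "\<not> LN 0"
        show False by (rule core2[of 0 "m+1"]) (use \<open>\<not> LN 0\<close> j0 True sup fd m1 in auto)
      next
        assume "\<not> LN (2*m+1)"
        show False by (rule core2[of m "2*m+1"]) (use \<open>\<not> LN m\<close> \<open>\<not> LN (2*m+1)\<close> sup fd m1 in auto)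
      qed
    qed
  next
    case True
    have "\<not> LN (m+1)" using not_both_LN[of m "m+1"] True by auto
    have "k0 \<noteq> m" using True k0 by auto
    show False by (rule core2[of k0 "m+1"]) (use k0 \<open>\<not> LN (m+1)\<close> \<open>k0 \<noteq> m\<close> sup fd in auto)
  qed
qed

end



context CV begin
lemma linear_diff: "Vector_Spaces.linear scale scale T \<Longrightarrow> T (a - b) = T a - T b"
  by (metis diff_add_cancel eq_diff_eq linear_add)

lemma span_stable:
  assumes lin: "Vector_Spaces.linear scale scale F" and st: "\<forall>v\<in>S. F v \<in> span S" and v: "v \<in> span S"
  shows "F v \<in> span S"
proof -
  have "subspace {v. F v \<in> span S}"
  proof (rule subspaceI)
    show "0 \<in> {v. F v \<in> span S}" using linear_zero[OF lin] by (simp add: span_zero)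
    show "x + y \<in> {v. F v \<in> span S}" if "x \<in> {v. F v \<in> span S}" "y \<in> {v. F v \<in> span S}" for x y
      using that linear_add[OF lin] by (simp add: span_add)
    show "c *s x \<in> {v. F v \<in> span S}" if "x \<in> {v. F v \<in> span S}" for c x
      using that linear_scl[OF lin] by (simp add: span_scale)
  qed
  moreover have "S \<subseteq> {v. F v \<in> span S}" using st by auto
  ultimately have "span S \<subseteq> {v. F v \<in> span S}" by (rule span_minimal[rotated])
  then show ?thesis using v by auto
qed
end

context HM begin

lemma part1:
  assumes m0: "m = 0" and n0: "\<not> LN 0" and n1: "\<not> LN 1"
    and sup: "supp scale H \<subseteq> {lam + of_int n | n. True}"
    and fd: "fin_dim_sub scale (weight_space scale H lam)"
  shows "\<exists>a \<mu>. a \<notin> \<int> \<and> iso_D scale H P Z a zd \<mu>"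
proof -
  have b0: "0 \<le> 2*m+1" and b1: "1 \<le> 2*m+1" by auto
  have sh0: "sh 0 = 1" and sh1: "sh 1 = -1" unfolding sh_def using m0 by auto
  have bc10: "bc 1 0 = zd" and bc01: "bc 0 1 = - zd" unfolding bc_def heis_coeff_def using m0 by auto
  have PP10: "P 1 (P 0 v) = P 0 (P 1 v) + zd *s v" for v using PP[OF b1 b0] bc10 by simp
  have PP01: "P 0 (P 1 v) = P 1 (P 0 v) + (- zd) *s v" for v using PP[OF b0 b1] bc01 by simp
  have lin0: "Vector_Spaces.linear scale scale (P 0)" by (rule linP[OF b0])
  have lin1: "Vector_Spaces.linear scale scale (P 1)" by (rule linP[OF b1])
  note l1 = linear_add[OF lin1, simplified] linear_scl[OF lin1, simplified] linear_diff[OF lin1, simplified]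
  have HP0: "H (P 0 v) = P 0 (H v) + P 0 v" for v using HP[OF b0] sh0 by simp
  have HP1: "H (P 1 v) = P 1 (H v) - P 1 v" for v using HP[OF b1, of v] sh1 by simp
  have w0s: "H ((P 0 ^^ n) v) = (\<mu> + of_nat n) *s (P 0 ^^ n) v" if "H v = \<mu> *s v" for n v \<mu>
    using weight_shift[OF b0 that, of n] sh0 by simp
  have w1s: "H ((P 1 ^^ n) v) = (\<mu> - of_nat n) *s (P 1 ^^ n) v" if "H v = \<mu> *s v" for n v \<mu>
    using weight_shift[OF b1 that, of n] sh1 by simp
  have inj0: "(P 0 ^^ n) v = 0 \<Longrightarrow> v = 0" for n v using inj_of_notLN[OF b0 n0] by blast
  have inj1: "(P 1 ^^ n) v = 0 \<Longrightarrow> v = 0" for n v using inj_of_notLN[OF b1 n1] by blast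
  have inj0': "P 0 v = 0 \<Longrightarrow> v = 0" for v using inj0[of 1] by simp
  have inj1': "P 1 v = 0 \<Longrightarrow> v = 0" for v using inj1[of 1] by simp
  have izd: "(1/zd) * zd = 1" using zd0 by simp
  define C where "C v = H v - (1/zd) *s P 1 (P 0 v)" for v
  have linC: "Vector_Spaces.linear scale scale C"
    using linH lin0 lin1 vector_space_axioms unfolding C_def
    by (simp add: Vector_Spaces.linear_iff scale_right_distrib scale_right_diff_distrib scale_left_commute)
  have C0: "C (P 0 v) = P 0 (C v)" for v
  proof -
    have "C (P 0 v) = (P 0 (H v) + P 0 v) - (1/zd) *s (P 0 (P 1 (P 0 v)) + zd *s P 0 v)"
      unfolding C_def using HP0[of v] PP10[of "P 0 v"] by simp
    also have "\<dots> = P 0 (H v) - (1/zd) *s P 0 (P 1 (P 0 v))"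
      using izd by (simp add: scale_right_distrib)
    also have "\<dots> = P 0 (C v)" unfolding C_def by (simp add: linear_diff[OF lin0] linear_scl[OF lin0])
    finally show ?thesis .
  qed
  have C1: "C (P 1 v) = P 1 (C v)" for v
  proof -
    have "C (P 1 v) = (P 1 (H v) - P 1 v) - (1/zd) *s P 1 (P 1 (P 0 v) + (- zd) *s v)"
      unfolding C_def using HP1[of v] PP01[of v] by simp
    also have "\<dots> = (P 1 (H v) - P 1 v) - (1/zd) *s (P 1 (P 1 (P 0 v)) + (- zd) *s P 1 v)"
      by (simp only: linear_add[OF lin1] linear_scl[OF lin1])
    also have "\<dots> = P 1 (H v) - (1/zd) *s P 1 (P 1 (P 0 v))"
      using zd0 by (simp add: scale_right_diff_distrib)
    also have "\<dots> = P 1 (C v)" unfolding C_def by (simp only: linear_diff[OF lin1] linear_scl[OF lin1])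
    finally show ?thesis .
  qed
  have CH: "C (H v) = H (C v)" for v
  proof -
    have "H (P 1 (P 0 v)) = P 1 (P 0 (H v) + P 0 v) - P 1 (P 0 v)" using HP1 HP0 by simp
    also have "\<dots> = P 1 (P 0 (H v))" by (simp add: l1)
    finally have e: "H (P 1 (P 0 v)) = P 1 (P 0 (H v))" .
    show ?thesis unfolding C_def by (simp add: linear_diff[OF linH] linear_scl[OF linH] e[simplified])
  qed
  have CZ: "C (Z v) = Z (C v)" for v using Zd linear_scl[OF linC] by simp
  obtain w0 \<mu> where w0: "w0 \<noteq> 0" "H w0 = \<mu> *s w0" using weight_vec by blast
  obtain t where t: "\<mu> = lam + of_int t" using wsp_nz[OF w0 sup] by blast
  have shiftw: "\<exists>v. v \<noteq> 0 \<and> H v = (\<nu> + of_int s) *s v" if "w \<noteq> 0" "H w = \<nu> *s w" for w \<nu> and s :: int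
  proof (cases "s \<ge> 0")
    case True
    show ?thesis
      using w0s[OF that(2), of "nat s"] inj0[of "nat s" w] that True by (intro exI[of _ "(P 0 ^^ nat s) w"]) auto
  next
    case False
    show ?thesis
      using w1s[OF that(2), of "nat (- s)"] inj1[of "nat (-s)" w] that False
      by (intro exI[of _ "(P 1 ^^ nat (-s)) w"]) (auto simp: of_nat_nat)
  qed
  obtain v1 where v1: "v1 \<noteq> 0" "H v1 = lam *s v1" using shiftw[OF w0, of "-t"] t by auto
  obtain B where B: "finite B" "B \<subseteq> weight_space scale H lam" "span B = weight_space scale H lam"
    using fd unfolding fin_dim_sub_def by blast
  have inW: "v \<in> span B \<longleftrightarrow> H v = lam *s v" for v using B(3) by (simp add: weight_space_def)
  have stC: "\<forall>v\<in>span B. C v \<in> span B"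
  proof
    fix v assume "v \<in> span B"
    then have "H v = lam *s v" using inW by blast
    then have "H (C v) = lam *s C v" using CH[of v] linear_scl[OF linC] by metis
    then show "C v \<in> span B" using inW by blast
  qed
  obtain v0 \<alpha> where v0: "v0 \<in> span B" "v0 \<noteq> 0" "C v0 = \<alpha> *s v0"
    using eig_exists[OF linC B(1) stC, of v1] inW v1 by blast
  have v0w: "H v0 = lam *s v0" using v0(1) inW by blast
  define E where "E = {v. C v = \<alpha> *s v}"
  have "invariant_sub scale m H P Z E"
    unfolding invariant_sub_def
  proof (intro conjI ballI allI impI)
    show "subspace E"
    proof (rule subspaceI)
      show "0 \<in> E" unfolding E_def using linear_zero[OF linC] by simp
      show "x + y \<in> E" if "x \<in> E" "y \<in> E" for x y
        using that linear_add[OF linC] unfolding E_def by (simp add: scale_right_distrib)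
      show "c *s x \<in> E" if "x \<in> E" for c x
        using that linear_scl[OF linC] unfolding E_def by (simp add: scale_left_commute)
    qed
    fix v assume v: "v \<in> E"
    show "H v \<in> E" using v CH linear_scl[OF linH] unfolding E_def by simp
    show "Z v \<in> E" using v CZ Zd linear_scl[OF linC] unfolding E_def by (simp add: scale_left_commute)
    fix k assume "k \<le> 2*m+1"
    then have "k = 0 \<or> k = 1" using m0 by auto
    then show "P k v \<in> E" using v C0 C1 linear_scl[OF lin0] linear_scl[OF lin1] unfolding E_def by auto
  qed
  moreover have "E \<noteq> {0}" using v0 unfolding E_def by auto
  ultimately have EU: "E = UNIV" by (rule inv_univ)
  have Call: "C v = \<alpha> *s v" for v using EU unfolding E_def by blast
  have Tw: "P 1 (P 0 w) = (zd * (\<nu> - \<alpha>)) *s w" if "H w = \<nu> *s w" for w \<nu>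
  proof -
    have "H w - (1/zd) *s P 1 (P 0 w) = \<alpha> *s w" using Call[of w] unfolding C_def .
    then have "(1/zd) *s P 1 (P 0 w) = (\<nu> - \<alpha>) *s w" using that by (simp add: scale_left_diff_distrib algebra_simps)
    then have "zd *s ((1/zd) *s P 1 (P 0 w)) = zd *s ((\<nu> - \<alpha>) *s w)" by simp
    then show ?thesis using zd0 by simp
  qed
  define a where "a = \<alpha> - lam"
  have anZ: "a \<notin> \<int>"
  proof
    assume "a \<in> \<int>"
    then obtain s where s: "a = of_int s" by (auto elim: Ints_cases)
    obtain v where v: "v \<noteq> 0" "H v = (lam + of_int s) *s v" using shiftw[OF v0(2) v0w] by blast
    have "P 1 (P 0 v) = (zd * ((lam + of_int s) - \<alpha>)) *s v" by (rule Tw[OF v(2)])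
    also have "(lam + of_int s) - \<alpha> = 0" using s a_def by (simp add: algebra_simps)
    finally have "P 1 (P 0 v) = 0" by simp
    then show False using inj0' inj1' v(1) by blast
  qed
  have anj: "a - of_nat j \<noteq> 0" for j
  proof
    assume "a - of_nat j = 0"
    then have "a = of_int (int j)" by simp
    then show False using anZ by (metis Ints_of_int)
  qed
  define cf where "cf n = (\<Prod>j<n. - 1 / (zd * (a - of_nat j)))" for n
  have cfS: "cf (Suc n) = cf n * (- 1 / (zd * (a - of_nat n)))" for n unfolding cf_def by simp
  have cfnz: "cf n \<noteq> 0" for n unfolding cf_def using zd0 anj by (simp add: prod_zero_iff)
  define e where "e i = (if 0 \<le> i then (P 1 ^^ nat i) v0 else cf (nat (-i)) *s (P 0 ^^ nat (-i)) v0)" for i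
  have epos: "e (int k) = (P 1 ^^ k) v0" for k unfolding e_def by simp
  have eneg: "e (- int k) = cf k *s (P 0 ^^ k) v0" for k
  proof (cases "k = 0")
    case True then show ?thesis by (simp add: e_def cf_def)
  next
    case False then show ?thesis by (simp add: e_def)
  qed
  have cases1: "(\<And>k. i = int k \<Longrightarrow> Q) \<Longrightarrow> (\<And>k. i = - int (Suc k) \<Longrightarrow> Q) \<Longrightarrow> Q" for i :: int and Q
    by (rule int_cases)
  have cases2: "(\<And>k. i = int (Suc k) \<Longrightarrow> Q) \<Longrightarrow> (\<And>k. i = - int k \<Longrightarrow> Q) \<Longrightarrow> Q" for i :: int and Q
  proof (rule int_cases[of i])
    fix n assume "i = int n" "(\<And>k. i = int (Suc k) \<Longrightarrow> Q)" "(\<And>k. i = - int k \<Longrightarrow> Q)"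
    then show Q by (cases n) auto
  next
    fix n assume "i = - int (Suc n)" "(\<And>k. i = - int k \<Longrightarrow> Q)"
    then show Q by blast
  qed
  have eH: "H (e i) = (lam - of_int i) *s e i" for i
  proof (rule cases1[of i])
    fix k assume i: "i = int k"
    show ?thesis unfolding i epos using w1s[OF v0w, of k] by simp
  next
    fix k assume i: "i = - int (Suc k)"
    have "H (e i) = cf (Suc k) *s ((lam + of_nat (Suc k)) *s (P 0 ^^ Suc k) v0)"
      unfolding i eneg using w0s[OF v0w, of "Suc k"] linear_scl[OF linH] by simp
    then show ?thesis unfolding i eneg by (simp add: scale_left_commute)
  qed
  have enz: "e i \<noteq> 0" for i
  proof (rule cases1[of i])
    fix k assume i: "i = int k"
    show ?thesis unfolding i epos using inj1 v0(2) by blast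
  next
    fix k assume i: "i = - int (Suc k)"
    show ?thesis unfolding i eneg using inj0[of "Suc k" v0] v0(2) cfnz[of "Suc k"] by auto
  qed
  have R1: "P 1 (e i) = e (i + 1)" for i
  proof (rule cases1[of i])
    fix k assume i: "i = int k"
    have ii: "i + 1 = int (Suc k)" using i by simp
    have "e (i+1) = (P 1 ^^ Suc k) v0" unfolding ii by (rule epos)
    moreover have "P 1 (e i) = (P 1 ^^ Suc k) v0" unfolding i epos by simp
    ultimately show ?thesis by simp
  next
    fix k assume i: "i = - int (Suc k)"
    have i1: "i + 1 = - int k" using i by simp
    have wk: "H ((P 0 ^^ k) v0) = (lam + of_nat k) *s (P 0 ^^ k) v0" by (rule w0s[OF v0w])
    have "P 1 (e i) = cf (Suc k) *s P 1 (P 0 ((P 0 ^^ k) v0))"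
      unfolding i eneg by (simp add: l1)
    also have "\<dots> = (cf (Suc k) * (zd * ((lam + of_nat k) - \<alpha>))) *s (P 0 ^^ k) v0"
      using Tw[OF wk] by simp
    also have "cf (Suc k) * (zd * ((lam + of_nat k) - \<alpha>)) = cf k"
    proof -
      have h: "(lam + of_nat k) - \<alpha> = - (a - of_nat k)" unfolding a_def by simp
      show ?thesis unfolding h cfS using zd0 anj[of k] by (simp add: field_simps)
    qed
    finally show ?thesis unfolding i1 eneg .
  qed
  have R0: "P 0 (e i) = (- zd * (a + of_int i)) *s e (i - 1)" for i
  proof (rule cases2[of i])
    fix k assume i: "i = int (Suc k)"
    have i1: "i - 1 = int k" using i by simp
    have wk: "H ((P 1 ^^ k) v0) = (lam - of_nat k) *s (P 1 ^^ k) v0" by (rule w1s[OF v0w])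
    have "P 0 (e i) = P 0 (P 1 ((P 1 ^^ k) v0))" unfolding i epos by simp
    also have "\<dots> = (zd * ((lam - of_nat k) - \<alpha>)) *s (P 1 ^^ k) v0 + (- zd) *s (P 1 ^^ k) v0"
      using PP01 Tw[OF wk] by simp
    also have "\<dots> = (zd * ((lam - of_nat k) - \<alpha>) + (- zd)) *s (P 1 ^^ k) v0"
      by (simp only: scale_left_distrib)
    also have "zd * ((lam - of_nat k) - \<alpha>) + (- zd) = - zd * (a + of_int i)"
      unfolding i a_def by (simp add: algebra_simps)
    finally show ?thesis unfolding i1 epos .
  next
    fix k assume i: "i = - int k"
    have i1: "i - 1 = - int (Suc k)" using i by simp
    have "P 0 (e i) = cf k *s (P 0 ^^ Suc k) v0"
      unfolding i eneg by (simp add: linear_scl[OF lin0])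
    also have "cf k = (- zd * (a + of_int i)) * cf (Suc k)"
      unfolding i cfS using zd0 anj[of k] by (simp add: field_simps)
    finally show ?thesis unfolding i1 eneg by simp
  qed
  have injev: "inj_on (\<lambda>i::int. lam - of_int i) UNIV" by (auto simp: inj_on_def)
  have ind: "independent (range e)" and inje: "inj_on e UNIV"
    using eig_indep_fam[OF linH, of UNIV e "\<lambda>i. lam - of_int i"] enz eH injev by auto
  define S where "S = span (range e)"
  have stH: "\<forall>v\<in>range e. H v \<in> S" unfolding S_def
  proof
    fix v assume "v \<in> range e" then obtain i where i: "v = e i" by blast
    show "H v \<in> span (range e)" unfolding i eH by (intro span_scale span_base) simp
  qed
  have stZ: "\<forall>v\<in>range e. Z v \<in> S" unfolding S_def
  proof
    fix v assume "v \<in> range e" then obtain i where i: "v = e i" by blast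
    show "Z v \<in> span (range e)" unfolding i Zd[rule_format] by (intro span_scale span_base) simp
  qed
  have st0: "\<forall>v\<in>range e. P 0 v \<in> S" unfolding S_def
  proof
    fix v assume "v \<in> range e" then obtain i where i: "v = e i" by blast
    show "P 0 v \<in> span (range e)" unfolding i R0 by (intro span_scale span_base) simp
  qed
  have st1: "\<forall>v\<in>range e. P 1 v \<in> S" unfolding S_def
  proof
    fix v assume "v \<in> range e" then obtain i where i: "v = e i" by blast
    show "P 1 v \<in> span (range e)" unfolding i R1 by (intro span_base) simp
  qed
  have linZ: "Vector_Spaces.linear scale scale Z"
    using Zd vector_space_axioms by (simp add: Vector_Spaces.linear_iff scale_right_distrib scale_left_commute)
  have "invariant_sub scale m H P Z S"
    unfolding invariant_sub_def
  proof (intro conjI ballI allI impI)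
    show "subspace S" unfolding S_def by simp
    fix v assume v: "v \<in> S"
    show "H v \<in> S" using span_stable[OF linH stH[unfolded S_def]] v unfolding S_def by blast
    show "Z v \<in> S" using span_stable[OF linZ stZ[unfolded S_def]] v unfolding S_def by blast
    fix k assume "k \<le> 2*m+1"
    then have "k = 0 \<or> k = 1" using m0 by auto
    then show "P k v \<in> S"
      using span_stable[OF lin0 st0[unfolded S_def]] span_stable[OF lin1 st1[unfolded S_def]] v
      unfolding S_def by blast
  qed
  moreover have "S \<noteq> {0}" using enz[of 0] unfolding S_def by (metis rangeI singletonD span_base)
  ultimately have SU: "S = UNIV" by (rule inv_univ)
  show ?thesis
  proof (intro exI conjI)
    show "a \<notin> \<int>" by (rule anZ)
    show "iso_D scale H P Z a zd lam"
      unfolding iso_D_def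
    proof (intro exI conjI allI)
      show "inj e" using inje .
      show "independent (range e)" by (rule ind)
      show "span (range e) = UNIV" using SU unfolding S_def .
      fix i
      show "P 1 (e i) = e (i + 1)" by (rule R1)
      show "P 0 (e i) = (- zd * (a + of_int i)) *s e (i - 1)" by (rule R0)
      show "Z (e i) = zd *s e i" using Zd by simp
      show "H (e i) = (lam - of_int i) *s e i" by (rule eH)
    qed
  qed
qed

end

theorem mainTheorem15:
  fixes scale :: "complex \<Rightarrow> 'v::ab_group_add \<Rightarrow> 'v"
    and m :: nat
    and H Z :: "'v \<Rightarrow> 'v" and P :: "nat \<Rightarrow> 'v \<Rightarrow> 'v"
    and zd lam :: complex
  assumes "is_hmod scale m H P Z"
    and "simple_mod scale m H P Z"
    and "weight_mod scale H"
    and "zd \<noteq> 0" and "\<forall>v. Z v = scale zd v"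
    and "supp scale H \<subseteq> {lam + of_int n | n. True}"
    and "fin_dim_sub scale (weight_space scale H lam)"
  shows "(m = 0 \<longrightarrow> highest_weight_mod scale m H P Z \<or> lowest_weight_mod scale m H P Z \<or>
            (\<exists>a \<mu>. a \<notin> \<int> \<and> iso_D scale H P Z a zd \<mu>))
       \<and> (m \<ge> 1 \<longrightarrow> highest_weight_mod scale m H P Z \<or> lowest_weight_mod scale m H P Z)"
proof -
  have vs: "vector_space scale" using assms(1) by (simp add: is_hmod_def)
  have hm: "HM scale m H Z P zd"
    unfolding HM_def HM_axioms_def CV_def using vs assms(1-5) by auto
  interpret HM scale m H Z P zd by (rule hm)
  show ?thesis
  proof (intro conjI impI)
    assume m0: "m = 0"
    show "highest_weight_mod scale m H P Z \<or> lowest_weight_mod scale m H P Z \<or>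
            (\<exists>a \<mu>. a \<notin> \<int> \<and> iso_D scale H P Z a zd \<mu>)"
    proof (cases "LN 0")
      case True
      then have "highest_weight_mod scale m H P Z" using m0 by (intro highest) auto
      then show ?thesis by blast
    next
      case False
      show ?thesis
      proof (cases "LN 1")
        case True
        then have "lowest_weight_mod scale m H P Z" using m0
          by (intro lowest) (auto simp: le_antisym)
        then show ?thesis by blast
      next
        case False
        then show ?thesis using part1[OF m0 \<open>\<not> LN 0\<close> False assms(6,7)] by blast
      qed
    qed
  next
    assume m1: "m \<ge> 1"
    show "highest_weight_mod scale m H P Z \<or> lowest_weight_mod scale m H P Z"
    proof (cases "\<forall>k\<le>m. LN k")
      case True then show ?thesis using highest by blast
    next
      case nh: False
      show ?thesis
      proof (cases "\<forall>k. m+1 \<le> k \<and> k \<le> 2*m+1 \<longrightarrow> LN k")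
        case True then show ?thesis using lowest by blast
      next
        case False
        then show ?thesis using part2[OF m1 assms(6,7) nh False] by blast
      qed
    qed
  qed
qed

end
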